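(* Let $u_0\in H^1(S^1)$ and let $(\rho,\rho_t)$ be the global solution for $t\ge0$ (with $\int_0^1\rho(t,x)^2dx=1$ for all $t$) of the system $\frac{d\rho}{dt}=\rho_t$, $\frac{d\rho_t}{dt}=f(\rho,\rho_t)$, $\rho(0)=1$, $\rho_t(0)=\tfrac12u_0'$. For $t\ge0$ let $K(t,x)=\int_0^x\rho(t,y)^2dy+t\,u_0(0)-\int_0^t\int_0^\tau H(s,0)\,ds\,d\tau$ and $N(t)=\{x\in S^1: K_x(t,x)\text{ exists and equals }0\}$ (i.e. $\rho(t,x)=0$). Then for almost every $t\in\mathbb{R}_+$, $$\int_{N(t)}\rho_t(t,y)^2\,dy=0.$$
   Context: $S^1=\mathbb{R}/\mathbb{Z}$; functions on $S^1$ are $1$-periodic functions on $[0,1]$. Let $\mu=\int_0^1u_0\,dx$. For $\rho,\sigma\in L^2(S^1)$ define $$G(\rho,\sigma)(x)=\int_0^x 2\rho\sigma\,dy+\mu-\int_0^1\Big(\int_0^y 2\rho\sigma\,dz\Big)\rho(y)^2\,dy,$$ $$F(\rho,\sigma)(x)=\int_0^1\frac{\cosh\big(\big|\int_y^x\rho(z)^2dz\big|-\tfrac12\big)}{2\sinh(1/2)}\big(\rho(y)^2G(y)^2+2\sigma(y)^2\big)\,dy,\qquad f(\rho,\sigma)=\tfrac12\rho\,(G^2-F),$$ with $G=G(\rho,\sigma)$. Along the solution write $G(t,x)=G(\rho(t),\rho_t(t))(x)$ and $$H(t,x)=\int_0^x\frac{\sinh\big(\int_y^x\rho^2dz-\tfrac12\big)}{2\sinh(1/2)}(\rho^2G^2+2\rho_t^2)(y)\,dy+\int_x^1\frac{\sinh\big(-\int_y^x\rho^2dz-\tfrac12\big)}{2\sinh(1/2)}(\rho^2G^2+2\rho_t^2)(y)\,dy.$$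 *)

theory Defs
  imports "HOL-Analysis.Analysis"
begin

text \<open>Functions on S^1 = R/Z are represented by 1-periodic functions real => real.
  Integrals are Lebesgue integrals; LBINT y=a..b is the oriented interval integral.\<close>

definition periodic1 :: "(real \<Rightarrow> real) \<Rightarrow> bool" where
  "periodic1 g \<longleftrightarrow> (\<forall>x. g (x + 1) = g x)"

definition isL2 :: "(real \<Rightarrow> real) \<Rightarrow> bool" where
  "isL2 g \<longleftrightarrow> g \<in> borel_measurable lborel \<and> set_integrable lborel {0..1} (\<lambda>x. (g x)^2)"

definition L2norm :: "(real \<Rightarrow> real) \<Rightarrow> real" where
  "L2norm g = sqrt (LINT x:{0..1}|lborel. (g x)^2)"

definition has_L2_derivative ::
  "(real \<Rightarrow> real \<Rightarrow> real) \<Rightarrow> (real \<Rightarrow> real) \<Rightarrow> real \<Rightarrow> real set \<Rightarrow> bool" where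
  "has_L2_derivative g g' t S \<longleftrightarrow>
     ((\<lambda>s. L2norm (\<lambda>x. (g s x - g t x) / (s - t) - g' x)) \<longlongrightarrow> 0) (at t within S)"

text \<open>The operators G, F, f of the paper (mu = mean of u0).\<close>
definition Gop :: "real \<Rightarrow> (real \<Rightarrow> real) \<Rightarrow> (real \<Rightarrow> real) \<Rightarrow> real \<Rightarrow> real" where
  "Gop \<mu> \<rho> \<sigma> x =
     (LBINT y=0..ereal x. 2 * \<rho> y * \<sigma> y) + \<mu>
     - (LBINT y=0..1. (LBINT z=0..ereal y. 2 * \<rho> z * \<sigma> z) * (\<rho> y)^2)"

definition Fop :: "real \<Rightarrow> (real \<Rightarrow> real) \<Rightarrow> (real \<Rightarrow> real) \<Rightarrow> real \<Rightarrow> real" where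
  "Fop \<mu> \<rho> \<sigma> x =
     (LBINT y=0..1. cosh (\<bar>LBINT z=ereal y..ereal x. (\<rho> z)^2\<bar> - 1/2) / (2 * sinh (1/2))
        * ((\<rho> y)^2 * (Gop \<mu> \<rho> \<sigma> y)^2 + 2 * (\<sigma> y)^2))"

definition fop :: "real \<Rightarrow> (real \<Rightarrow> real) \<Rightarrow> (real \<Rightarrow> real) \<Rightarrow> real \<Rightarrow> real" where
  "fop \<mu> \<rho> \<sigma> x = 1/2 * \<rho> x * ((Gop \<mu> \<rho> \<sigma> x)^2 - Fop \<mu> \<rho> \<sigma> x)"

text \<open>H evaluated along (rho, sigma) = (rho(t), rho_t(t)).\<close>
definition Hop :: "real \<Rightarrow> (real \<Rightarrow> real) \<Rightarrow> (real \<Rightarrow> real) \<Rightarrow> real \<Rightarrow> real" where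
  "Hop \<mu> \<rho> \<sigma> x =
     (LBINT y=0..ereal x. sinh ((LBINT z=ereal y..ereal x. (\<rho> z)^2) - 1/2) / (2 * sinh (1/2))
        * ((\<rho> y)^2 * (Gop \<mu> \<rho> \<sigma> y)^2 + 2 * (\<sigma> y)^2))
   + (LBINT y=ereal x..1. sinh (- (LBINT z=ereal y..ereal x. (\<rho> z)^2) - 1/2) / (2 * sinh (1/2))
        * ((\<rho> y)^2 * (Gop \<mu> \<rho> \<sigma> y)^2 + 2 * (\<sigma> y)^2))"

text \<open>K(t,x) of the paper, for the solution (rho, v) with v = rho_t.\<close>
definition Kfun :: "real \<Rightarrow> (real \<Rightarrow> real) \<Rightarrow> (real \<Rightarrow> real \<Rightarrow> real) \<Rightarrow> (real \<Rightarrow> real \<Rightarrow> real)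
    \<Rightarrow> real \<Rightarrow> real \<Rightarrow> real" where
  "Kfun \<mu> u0 \<rho> v t x =
     (LBINT y=0..ereal x. (\<rho> t y)^2) + t * u0 0
     - (LBINT \<tau>=0..ereal t. (LBINT s=0..ereal \<tau>. Hop \<mu> (\<rho> s) (v s) 0))"

definition Nset :: "real \<Rightarrow> (real \<Rightarrow> real) \<Rightarrow> (real \<Rightarrow> real \<Rightarrow> real) \<Rightarrow> (real \<Rightarrow> real \<Rightarrow> real)
    \<Rightarrow> real \<Rightarrow> real set" where
  "Nset \<mu> u0 \<rho> v t = {x \<in> {0..<1}. ((\<lambda>y. Kfun \<mu> u0 \<rho> v t y) has_real_derivative 0) (at x)}"

end

theory Submission
  imports Defs
begin

lemma ival_eq: "(LBINT z=ereal a..ereal b. (g::real\<Rightarrow>real) z) =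
   (if a \<le> b then (\<integral>z. indicator {a<..<b} z * g z \<partial>lborel) else - (\<integral>z. indicator {b<..<a} z * g z \<partial>lborel))"
  by (simp add: interval_lebesgue_integral_def set_lebesgue_integral_def)

lemma meas_ival2:
  fixes g :: "real \<Rightarrow> real"
  assumes [measurable]: "g \<in> borel_measurable lborel"
  shows "(\<lambda>p::real\<times>real. LBINT z=ereal (fst p)..ereal (snd p). g z) \<in> borel_measurable borel"
proof -
  have 1: "(\<lambda>p::real\<times>real. \<integral>z. indicator {fst p<..<snd p} z * g z \<partial>lborel) \<in> borel_measurable (borel \<Otimes>\<^sub>M borel)"
    apply (rule lborel.borel_measurable_lebesgue_integral)
    apply (simp add: indicator_def split_beta' of_bool_def)
    by measurable
  have 2: "(\<lambda>p::real\<times>real. \<integral>z. indicator {snd p<..<fst p} z * g z \<partial>lborel) \<in> borel_measurable (borel \<Otimes>\<^sub>M borel)"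
    apply (rule lborel.borel_measurable_lebesgue_integral)
    apply (simp add: indicator_def split_beta' of_bool_def)
    by measurable
  show ?thesis
    unfolding ival_eq using 1 2 by (simp add: borel_prod[symmetric]) measurable
qed

lemma meas_ival2':
  fixes g :: "real \<Rightarrow> real"
  assumes "g \<in> borel_measurable lborel" "a \<in> borel_measurable M" "b \<in> borel_measurable M"
  shows "(\<lambda>x. LBINT z=ereal (a x)..ereal (b x). g z) \<in> borel_measurable M"
proof -
  have "(\<lambda>x. (\<lambda>p::real\<times>real. LBINT z=ereal (fst p)..ereal (snd p). g z) (a x, b x)) \<in> borel_measurable M"
    by (rule measurable_compose[OF _ meas_ival2[OF assms(1)]]) (use assms in measurable)
  then show ?thesis by simp
qed

lemma meas_ival1:
  fixes g :: "real \<Rightarrow> real"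
  assumes "g \<in> borel_measurable lborel" "b \<in> borel_measurable M"
  shows "(\<lambda>x. LBINT z=0..ereal (b x). g z) \<in> borel_measurable M"
  using meas_ival2'[OF assms(1) _ assms(2), of "\<lambda>_. 0"] by (simp add: zero_ereal_def)

lemma L2_meas: "isL2 f \<Longrightarrow> f \<in> borel_measurable borel"
  by (simp add: isL2_def)

lemma L2_sq: "isL2 f \<Longrightarrow> set_integrable lborel {0..1} (\<lambda>x. (f x)^2)"
  by (simp add: isL2_def)

lemma L2_lin:
  assumes "isL2 f" "isL2 g"
  shows "isL2 (\<lambda>x. a * f x + b * g x)"
proof -
  have [measurable]: "f \<in> borel_measurable borel" "g \<in> borel_measurable borel" using assms by (auto simp: isL2_def)
  have i: "set_integrable lborel {0..1} (\<lambda>x. 2*a^2 * (f x)^2 + 2*b^2*(g x)^2)"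
    using assms by (auto simp: isL2_def)
  have "set_integrable lborel {0..1} (\<lambda>x. (a * f x + b * g x)^2)"
  proof (rule set_integrable_bound[OF i])
    show "set_borel_measurable lborel {0..1} (\<lambda>x. (a * f x + b * g x)^2)"
      unfolding set_borel_measurable_def by measurable
    have "(a * f x + b * g x)^2 \<le> 2*a^2 * (f x)^2 + 2*b^2*(g x)^2" for x
    proof -
      have "0 \<le> (a * f x - b * g x)^2" by simp
      then show ?thesis by (simp add: power2_eq_square algebra_simps)
    qed
    then show "AE x in lborel. x \<in> {0..1} \<longrightarrow> norm ((a * f x + b * g x)^2) \<le> norm (2*a^2 * (f x)^2 + 2*b^2*(g x)^2)"
      by auto
  qed
  then show ?thesis unfolding isL2_def by simp
qed

lemma L2_add: "isL2 f \<Longrightarrow> isL2 g \<Longrightarrow> isL2 (\<lambda>x. f x + g x)"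
  using L2_lin[of f g 1 1] by simp
lemma L2_diff: "isL2 f \<Longrightarrow> isL2 g \<Longrightarrow> isL2 (\<lambda>x. f x - g x)"
  using L2_lin[of f g 1 "-1"] by simp
lemma L2_scale: "isL2 f \<Longrightarrow> isL2 (\<lambda>x. c * f x)"
  using L2_lin[of f f c 0] by simp

lemma L2_sq_sub:
  assumes "isL2 f" "A \<in> sets borel" "A \<subseteq> {0..1}"
  shows "set_integrable lborel A (\<lambda>x. (f x)^2)"
  by (rule set_integrable_subset[OF L2_sq[OF assms(1)]]) (use assms in auto)

lemma Q_nonneg: "0 \<le> (LINT x:A|lborel. (f x)^2 :: real)"
  unfolding set_lebesgue_integral_def by (rule Bochner_Integration.integral_nonneg) (auto simp: indicator_def)

lemma Q_scale: "(LINT x:A|lborel. (c * f x)^2) = c^2 * (LINT x:A|lborel. (f x)^2 :: real)"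
  by (simp add: power_mult_distrib)

lemma Q_mono_set:
  assumes "isL2 f" "A \<in> sets borel" "B \<in> sets borel" "A \<subseteq> B" "B \<subseteq> {0..1}"
  shows "(LINT x:A|lborel. (f x)^2) \<le> (LINT x:B|lborel. (f x)^2 :: real)"
proof -
  have iA: "set_integrable lborel A (\<lambda>x. (f x)^2)" using L2_sq_sub assms by blast
  have iB: "set_integrable lborel B (\<lambda>x. (f x)^2)" using L2_sq_sub assms by blast
  show ?thesis unfolding set_lebesgue_integral_def
    apply (rule integral_mono)
    using iA iB assms(4) by (auto simp: set_integrable_def indicator_def)
qed

lemma Q_tri:
  assumes "isL2 f" "isL2 g" "A \<in> sets borel" "A \<subseteq> {0..1}"
  shows "(LINT x:A|lborel. (f x + g x)^2) \<le> 2 * (LINT x:A|lborel. (f x)^2) + 2 * (LINT x:A|lborel. (g x)^2 :: real)"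
proof -
  have i1: "set_integrable lborel A (\<lambda>x. (f x + g x)^2)" using L2_sq_sub[OF L2_add[OF assms(1,2)] assms(3,4)] .
  have i2: "set_integrable lborel A (\<lambda>x. (f x)^2)" using L2_sq_sub assms by blast
  have i3: "set_integrable lborel A (\<lambda>x. (g x)^2)" using L2_sq_sub assms by blast
  have "(LINT x:A|lborel. (f x + g x)^2) \<le> (LINT x:A|lborel. 2 * (f x)^2 + 2 * (g x)^2)"
  proof (rule set_integral_mono[OF i1])
    show "set_integrable lborel A (\<lambda>x. 2 * (f x)^2 + 2 * (g x)^2)" using i2 i3 by auto
    show "(f x + g x)^2 \<le> 2 * (f x)^2 + 2 * (g x)^2" for x
    proof -
      have "0 \<le> (f x - g x)^2" by simp
      then show ?thesis by (simp add: power2_eq_square algebra_simps)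
    qed
  qed
  also have "\<dots> = 2 * (LINT x:A|lborel. (f x)^2) + 2 * (LINT x:A|lborel. (g x)^2)"
    using i2 i3 by (simp add: set_integral_add)
  finally show ?thesis .
qed

lemma bonf_pointwise:
  fixes N :: "real \<Rightarrow> real set"
  assumes P: "finite P"
  shows "(\<Sum>p\<in>P. indicator (N p) x) - (\<Sum>pq\<in>{pq\<in>P\<times>P. fst pq \<noteq> snd pq}. indicator (N (fst pq) \<inter> N (snd pq)) x)
           \<le> (indicator (\<Union>p\<in>P. N p) x :: real)"
proof -
  define A where "A = {p\<in>P. x \<in> N p}"
  have fA: "finite A" using P by (simp add: A_def)
  have s1: "(\<Sum>p\<in>P. indicator (N p) x :: real) = real (card A)"
    using P by (simp add: indicator_def A_def Int_def conj_commute)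
  have fPP: "finite {pq\<in>P\<times>P. fst pq \<noteq> snd pq}" using P by simp
  have s2: "(\<Sum>pq\<in>{pq\<in>P\<times>P. fst pq \<noteq> snd pq}. indicator (N (fst pq) \<inter> N (snd pq)) x :: real)
        = real (card {pq\<in>A\<times>A. fst pq \<noteq> snd pq})"
  proof -
    have "(\<Sum>pq\<in>{pq\<in>P\<times>P. fst pq \<noteq> snd pq}. indicator (N (fst pq) \<inter> N (snd pq)) x :: real)
       = real (card ({pq\<in>P\<times>P. fst pq \<noteq> snd pq} \<inter> {pq. x \<in> N (fst pq) \<inter> N (snd pq)}))"
      using fPP by (simp add: indicator_def)
    also have "{pq\<in>P\<times>P. fst pq \<noteq> snd pq} \<inter> {pq. x \<in> N (fst pq) \<inter> N (snd pq)} = {pq\<in>A\<times>A. fst pq \<noteq> snd pq}"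
      by (auto simp: A_def)
    finally show ?thesis .
  qed
  have c2: "card {pq\<in>A\<times>A. fst pq \<noteq> snd pq} = card A * card A - card A"
  proof -
    have e: "{pq\<in>A\<times>A. fst pq \<noteq> snd pq} = A\<times>A - (\<lambda>p. (p,p)) ` A" by auto
    have "card ((\<lambda>p. (p,p)) ` A) = card A" by (rule card_image) (auto simp: inj_on_def)
    then show ?thesis unfolding e using fA
      by (subst card_Diff_subset) (auto simp: card_cartesian_product)
  qed
  show ?thesis
  proof (cases "A = {}")
    case True
    then show ?thesis using s1 s2 by (simp add: indicator_def)
  next
    case False
    then have k: "card A \<ge> 1" using fA by (simp add: Suc_le_eq card_gt_0_iff)
    have u: "indicator (\<Union>p\<in>P. N p) x = (1::real)" using False by (auto simp: A_def indicator_def)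
    have "real (card A * card A - card A) = real (card A) * real (card A) - real (card A)"
      using k by (simp add: of_nat_diff)
    moreover have "real (card A) - (real (card A) * real (card A) - real (card A)) \<le> 1"
    proof -
      have "0 \<le> (real (card A) - 1)^2" by simp
      then show ?thesis by (simp add: power2_eq_square algebra_simps)
    qed
    ultimately show ?thesis using s1 s2 c2 u by simp
  qed
qed

lemma pick_points:
  fixes T :: "real set"
  assumes lim: "t0 islimpt T" and d: "d > 0"
  shows "\<exists>P. finite P \<and> card P = n \<and> P \<subseteq> T \<and> (\<forall>p\<in>P. p \<noteq> t0 \<and> \<bar>p - t0\<bar> < d)
     \<and> (\<forall>p\<in>P. \<forall>q\<in>P. p \<noteq> q \<longrightarrow> \<bar>p - t0\<bar> + \<bar>q - t0\<bar> \<le> 3 * \<bar>p - q\<bar>)"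
proof (induction n)
  case 0
  show ?case by (rule exI[of _ "{}"]) auto
next
  case (Suc n)
  then obtain P where P: "finite P" "card P = n" "P \<subseteq> T" "\<forall>p\<in>P. p \<noteq> t0 \<and> \<bar>p - t0\<bar> < d"
     "\<forall>p\<in>P. \<forall>q\<in>P. p \<noteq> q \<longrightarrow> \<bar>p - t0\<bar> + \<bar>q - t0\<bar> \<le> 3 * \<bar>p - q\<bar>" by blast
  define r where "r = Min (insert d ((\<lambda>p. \<bar>p - t0\<bar> / 2) ` P))"
  have r_pos: "r > 0" unfolding r_def using P(1,4) d by (subst Min_gr_iff) auto
  have r_le1: "r \<le> d" unfolding r_def using P(1) by auto
  have r_le2: "r \<le> \<bar>p - t0\<bar> / 2" if "p \<in> P" for p
    unfolding r_def using P(1) that by (intro Min_le) auto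
  note r_le = r_le1 r_le2
  obtain s where s: "s \<in> T" "s \<noteq> t0" "dist s t0 < r"
    using lim r_pos unfolding islimpt_approachable by blast
  have sd: "\<bar>s - t0\<bar> < r" using s(3) by (simp add: dist_real_def)
  have sP: "s \<notin> P" using r_le(2) sd by force
  show ?case
  proof (rule exI[of _ "insert s P"], intro conjI)
    show "finite (insert s P)" using P by simp
    show "card (insert s P) = Suc n" using P sP by simp
    show "insert s P \<subseteq> T" using P s by simp
    show "\<forall>p\<in>insert s P. p \<noteq> t0 \<and> \<bar>p - t0\<bar> < d" using P s sd r_le by auto
    have key: "\<bar>p - t0\<bar> + \<bar>s - t0\<bar> \<le> 3 * \<bar>p - s\<bar>" if "p \<in> P" for p
      using r_le(2)[OF that] sd by (simp add: abs_if split: if_splits)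
    show "\<forall>p\<in>insert s P. \<forall>q\<in>insert s P. p \<noteq> q \<longrightarrow> \<bar>p - t0\<bar> + \<bar>q - t0\<bar> \<le> 3 * \<bar>p - q\<bar>"
      using P(5) key by (auto simp: abs_minus_commute add.commute)
  qed
qed

lemma core_finite:
  fixes \<rho> v :: "real \<Rightarrow> real \<Rightarrow> real" and N :: "real \<Rightarrow> real set" and S :: "real set" and a B :: real
  assumes Scl: "closed S"
    and L2: "\<And>t. t \<in> S \<Longrightarrow> isL2 (\<rho> t) \<and> isL2 (v t)"
    and Nb: "\<And>t. t \<in> S \<Longrightarrow> N t \<in> sets borel \<and> N t \<subseteq> {0..1}"
    and Z: "\<And>t. t \<in> S \<Longrightarrow> AE x in lborel. x \<in> N t \<longrightarrow> \<rho> t x = 0"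
    and D: "\<And>t \<eta>. t \<in> S \<Longrightarrow> \<eta> > 0 \<Longrightarrow> \<forall>\<^sub>F s in at t within S.
              (LINT x:{0..1}|lborel. (\<rho> s x - \<rho> t x - (s - t) * v t x)^2) \<le> \<eta>^2 * (s - t)^2"
    and C: "\<And>t \<eta>. t \<in> S \<Longrightarrow> \<eta> > 0 \<Longrightarrow> \<forall>\<^sub>F s in at t within S.
              (LINT x:{0..1}|lborel. (v s x - v t x)^2) \<le> \<eta>^2"
    and a: "a > 0"
  shows "finite {t\<in>S. \<bar>t\<bar> \<le> B \<and> a \<le> (LINT x:N t|lborel. (v t x)^2)}"
proof (rule ccontr)
  let ?T = "{t\<in>S. \<bar>t\<bar> \<le> B \<and> a \<le> (LINT x:N t|lborel. (v t x)^2)}"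
  assume inf: "infinite ?T"
  have cpt: "compact ({-B..B} \<inter> S)" using Scl by (simp add: compact_Int_closed)
  have sub: "?T \<subseteq> {-B..B} \<inter> S" by auto
  obtain t0 where t0: "t0 \<in> {-B..B} \<inter> S" "t0 islimpt ?T"
    using Heine_Borel_imp_Bolzano_Weierstrass[OF cpt inf sub] by blast
  have t0S: "t0 \<in> S" using t0 by auto
  define w where "w = v t0"
  have L2w: "isL2 w" using L2[OF t0S] by (simp add: w_def)
  define V where "V = (LINT x:{0..1}|lborel. (w x)^2)"
  obtain n :: nat where n: "4*V/a < real n" using reals_Archimedean2 by blast
  define \<eta> where "\<eta> = sqrt (a / (4 * (1 + 18 * real n)))"
  have \<eta>pos: "\<eta> > 0" unfolding \<eta>_def using a by simp
  have \<eta>2: "\<eta>^2 = a / (4 * (1 + 18 * real n))" unfolding \<eta>_def using a by simp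
  define e where "e = (\<lambda>s x. \<rho> s x - \<rho> t0 x - (s - t0) * w x)"
  have "\<forall>\<^sub>F s in at t0 within S. (LINT x:{0..1}|lborel. (e s x)^2) \<le> \<eta>^2 * (s - t0)^2
        \<and> (LINT x:{0..1}|lborel. (v s x - w x)^2) \<le> \<eta>^2"
    using eventually_conj[OF D[OF t0S \<eta>pos] C[OF t0S \<eta>pos]] by (simp add: e_def w_def)
  then obtain d where d: "d > 0" "\<And>s. s \<in> S \<Longrightarrow> s \<noteq> t0 \<Longrightarrow> dist s t0 < d \<Longrightarrow>
      (LINT x:{0..1}|lborel. (e s x)^2) \<le> \<eta>^2 * (s - t0)^2
        \<and> (LINT x:{0..1}|lborel. (v s x - w x)^2) \<le> \<eta>^2"
    unfolding eventually_at by blast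
  obtain P where P: "finite P" "card P = n" "P \<subseteq> ?T" "\<forall>p\<in>P. p \<noteq> t0 \<and> \<bar>p - t0\<bar> < d"
     "\<forall>p\<in>P. \<forall>q\<in>P. p \<noteq> q \<longrightarrow> \<bar>p - t0\<bar> + \<bar>q - t0\<bar> \<le> 3 * \<bar>p - q\<bar>"
    using pick_points[OF t0(2) d(1), of n] by blast
  have PS: "p \<in> S" "a \<le> (LINT x:N p|lborel. (v p x)^2)" if "p \<in> P" for p using P(3) that by auto
  have Pest: "(LINT x:{0..1}|lborel. (e p x)^2) \<le> \<eta>^2 * (p - t0)^2
        \<and> (LINT x:{0..1}|lborel. (v p x - w x)^2) \<le> \<eta>^2" if "p \<in> P" for p
    using d(2)[OF PS(1)[OF that]] P(4) that by (auto simp: dist_real_def)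
  have L2e: "isL2 (e p)" if "p \<in> P" for p
    unfolding e_def using L2[OF PS(1)[OF that]] L2[OF t0S] L2w
    by (intro L2_diff L2_scale) auto
  have NbP: "N p \<in> sets borel" "N p \<subseteq> {0..1}" if "p \<in> P" for p using Nb[OF PS(1)[OF that]] by auto
  have estA: "a/2 - \<eta>^2 \<le> (LINT x:N p|lborel. (w x)^2)" if p: "p \<in> P" for p
  proof -
    have L2vp: "isL2 (v p)" using L2[OF PS(1)[OF p]] by simp
    have L2d: "isL2 (\<lambda>x. v p x - w x)" using L2_diff[OF L2vp L2w] .
    have "a \<le> (LINT x:N p|lborel. (v p x)^2)" using PS(2)[OF p] .
    also have "\<dots> = (LINT x:N p|lborel. (w x + (v p x - w x))^2)" by simp
    also have "\<dots> \<le> 2 * (LINT x:N p|lborel. (w x)^2) + 2 * (LINT x:N p|lborel. (v p x - w x)^2)"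
      by (rule Q_tri[OF L2w L2d NbP[OF p]])
    also have "(LINT x:N p|lborel. (v p x - w x)^2) \<le> (LINT x:{0..1}|lborel. (v p x - w x)^2)"
      by (rule Q_mono_set[OF L2d NbP(1)[OF p] _ NbP(2)[OF p]]) auto
    finally show ?thesis using Pest[OF p] by simp
  qed
  have estB: "(LINT x:N p \<inter> N q|lborel. (w x)^2) \<le> 18 * \<eta>^2" if p: "p \<in> P" and q: "q \<in> P" and pq: "p \<noteq> q" for p q
  proof -
    let ?M = "N p \<inter> N q"
    have Mb: "?M \<in> sets borel" "?M \<subseteq> {0..1}" using NbP[OF p] NbP[OF q] by auto
    have L2ep: "isL2 (\<lambda>x. (-1) * e p x)" using L2_scale[OF L2e[OF p]] .
    have [measurable]: "w \<in> borel_measurable borel" "e p \<in> borel_measurable borel" "e q \<in> borel_measurable borel"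
      using L2w L2e[OF p] L2e[OF q] by (auto simp: isL2_def)
    have ae: "AE x in lborel. x \<in> ?M \<longrightarrow> ((p - q) * w x)^2 = (e q x + (-1) * e p x)^2"
      using Z[OF PS(1)[OF p]] Z[OF PS(1)[OF q]]
    proof eventually_elim
      case (elim x)
      then show ?case by (auto simp: e_def algebra_simps)
    qed
    have "(p - q)^2 * (LINT x:?M|lborel. (w x)^2) = (LINT x:?M|lborel. ((p - q) * w x)^2)"
      by (simp add: Q_scale)
    also have "\<dots> = (LINT x:?M|lborel. (e q x + (-1) * e p x)^2)"
      by (rule set_lebesgue_integral_cong_AE) (use ae Mb in auto)
    also have "\<dots> \<le> 2 * (LINT x:?M|lborel. (e q x)^2) + 2 * (LINT x:?M|lborel. ((-1) * e p x)^2)"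
      by (rule Q_tri[OF L2e[OF q] L2ep Mb])
    also have "(LINT x:?M|lborel. ((-1) * e p x)^2) = (LINT x:?M|lborel. (e p x)^2)"
      by (simp add: Q_scale)
    also have "(LINT x:?M|lborel. (e q x)^2) \<le> (LINT x:{0..1}|lborel. (e q x)^2)"
      by (rule Q_mono_set[OF L2e[OF q] Mb(1) _ _]) (use Mb in auto)
    also have "(LINT x:?M|lborel. (e p x)^2) \<le> (LINT x:{0..1}|lborel. (e p x)^2)"
      by (rule Q_mono_set[OF L2e[OF p] Mb(1) _ _]) (use Mb in auto)
    finally have 1: "(p - q)^2 * (LINT x:?M|lborel. (w x)^2) \<le> 2 * (\<eta>^2 * (q - t0)^2) + 2 * (\<eta>^2 * (p - t0)^2)"
      using Pest[OF p] Pest[OF q] by linarith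
    have "(q - t0)^2 + (p - t0)^2 \<le> (\<bar>p - t0\<bar> + \<bar>q - t0\<bar>)^2"
      by (simp add: power2_eq_square algebra_simps)
    also have "\<dots> \<le> (3 * \<bar>p - q\<bar>)^2"
      using P(5) p q pq by (intro power_mono) auto
    finally have 2: "(q - t0)^2 + (p - t0)^2 \<le> 9 * (p - q)^2" by (simp add: power2_eq_square)
    have "(p - q)^2 * (LINT x:?M|lborel. (w x)^2) \<le> (p - q)^2 * (18 * \<eta>^2)"
    proof -
      have "2 * (\<eta>^2 * (q - t0)^2) + 2 * (\<eta>^2 * (p - t0)^2) = 2 * \<eta>^2 * ((q - t0)^2 + (p - t0)^2)"
        by (simp add: algebra_simps)
      also have "\<dots> \<le> 2 * \<eta>^2 * (9 * (p - q)^2)"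
        using 2 by (intro mult_left_mono) auto
      finally show ?thesis using 1 by (simp add: algebra_simps)
    qed
    moreover have "(p - q)^2 > 0" using pq by simp
    ultimately show ?thesis by simp
  qed
  define PP where "PP = {pq\<in>P\<times>P. fst pq \<noteq> snd pq}"
  have fPP: "finite PP" using P(1) by (simp add: PP_def)
  have bonf: "(\<Sum>p\<in>P. (LINT x:N p|lborel. (w x)^2)) - (\<Sum>pq\<in>PP. (LINT x:N (fst pq) \<inter> N (snd pq)|lborel. (w x)^2)) \<le> V"
  proof -
    have [measurable]: "w \<in> borel_measurable borel" using L2w by (simp add: isL2_def)
    let ?U = "\<Union>p\<in>P. N p"
    have Ub: "?U \<in> sets borel" "?U \<subseteq> {0..1}" using NbP P(1) by auto
    have i1: "integrable lborel (\<lambda>x. indicator (N p) x * (w x)^2)" if "p \<in> P" for p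
      using L2_sq_sub[OF L2w NbP[OF that]] by (simp add: set_integrable_def)
    have i2: "integrable lborel (\<lambda>x. indicator (N (fst pq) \<inter> N (snd pq)) x * (w x)^2)" if "pq \<in> PP" for pq
    proof -
      have "fst pq \<in> P" "snd pq \<in> P" using that by (auto simp: PP_def)
      then have "N (fst pq) \<inter> N (snd pq) \<in> sets borel" "N (fst pq) \<inter> N (snd pq) \<subseteq> {0..1}"
        using NbP by auto
      from L2_sq_sub[OF L2w this] show ?thesis by (simp add: set_integrable_def)
    qed
    have i3: "integrable lborel (\<lambda>x. indicator ?U x * (w x)^2)"
      using L2_sq_sub[OF L2w Ub] by (simp add: set_integrable_def)
    have "(\<Sum>p\<in>P. (LINT x:N p|lborel. (w x)^2)) - (\<Sum>pq\<in>PP. (LINT x:N (fst pq) \<inter> N (snd pq)|lborel. (w x)^2))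
        = (\<integral>x. (\<Sum>p\<in>P. indicator (N p) x * (w x)^2) - (\<Sum>pq\<in>PP. indicator (N (fst pq) \<inter> N (snd pq)) x * (w x)^2) \<partial>lborel)"
      unfolding set_lebesgue_integral_def using i1 i2
      by (simp add: Bochner_Integration.integral_sum Bochner_Integration.integral_diff)
    also have "\<dots> \<le> (\<integral>x. indicator ?U x * (w x)^2 \<partial>lborel)"
    proof (rule integral_mono)
      show "integrable lborel (\<lambda>x. (\<Sum>p\<in>P. indicator (N p) x * (w x)^2) - (\<Sum>pq\<in>PP. indicator (N (fst pq) \<inter> N (snd pq)) x * (w x)^2))"
        using i1 i2 by (intro Bochner_Integration.integrable_diff Bochner_Integration.integrable_sum) auto
      show "integrable lborel (\<lambda>x. indicator ?U x * (w x)^2)" by (rule i3)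
      fix x
      have "((\<Sum>p\<in>P. indicator (N p) x) - (\<Sum>pq\<in>PP. indicator (N (fst pq) \<inter> N (snd pq)) x)) * (w x)^2
          \<le> indicator ?U x * (w x)^2"
        using bonf_pointwise[OF P(1), of N x] unfolding PP_def by (intro mult_right_mono) auto
      then show "(\<Sum>p\<in>P. indicator (N p) x * (w x)^2) - (\<Sum>pq\<in>PP. indicator (N (fst pq) \<inter> N (snd pq)) x * (w x)^2)
          \<le> indicator ?U x * (w x)^2"
        by (simp add: sum_distrib_right left_diff_distrib)
    qed
    also have "\<dots> = (LINT x:?U|lborel. (w x)^2)" by (simp add: set_lebesgue_integral_def)
    also have "\<dots> \<le> V" unfolding V_def by (rule Q_mono_set[OF L2w Ub(1) _ Ub(2)]) auto
    finally show ?thesis .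
  qed
  have s1: "real n * (a/2 - \<eta>^2) \<le> (\<Sum>p\<in>P. (LINT x:N p|lborel. (w x)^2))"
    using sum_bounded_below[of P "a/2 - \<eta>^2" "\<lambda>p. (LINT x:N p|lborel. (w x)^2)"] estA P(2) by auto
  have cPP: "card PP \<le> n * n"
  proof -
    have "card PP \<le> card (P \<times> P)" using P(1) by (intro card_mono) (auto simp: PP_def)
    then show ?thesis using P(2) by (simp add: card_cartesian_product)
  qed
  have s2: "(\<Sum>pq\<in>PP. (LINT x:N (fst pq) \<inter> N (snd pq)|lborel. (w x)^2)) \<le> real n * real n * (18 * \<eta>^2)"
  proof -
    have "(\<Sum>pq\<in>PP. (LINT x:N (fst pq) \<inter> N (snd pq)|lborel. (w x)^2)) \<le> real (card PP) * (18 * \<eta>^2)"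
      using sum_bounded_above[of PP "\<lambda>pq. (LINT x:N (fst pq) \<inter> N (snd pq)|lborel. (w x)^2)" "18 * \<eta>^2"] estB
      by (auto simp: PP_def)
    also have "\<dots> \<le> real (n * n) * (18 * \<eta>^2)"
    proof (rule mult_right_mono)
      show "real (card PP) \<le> real (n * n)" using cPP by linarith
    qed simp
    finally show ?thesis by simp
  qed
  have f1: "real n * (a/2) - real n * \<eta>^2 * (1 + 18 * real n) \<le> V"
    using bonf s1 s2 by (simp add: algebra_simps)
  have f2: "real n * \<eta>^2 * (1 + 18 * real n) = real n * a / 4"
    unfolding \<eta>2 by (simp add: field_simps)
  have f3: "4 * V < real n * a" using n a by (simp add: field_simps)
  show False using f1 f2 f3 by linarith
qed

lemma core_countable:
  fixes \<rho> v :: "real \<Rightarrow> real \<Rightarrow> real" and N :: "real \<Rightarrow> real set" and S :: "real set"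
  assumes Scl: "closed S"
    and L2: "\<And>t. t \<in> S \<Longrightarrow> isL2 (\<rho> t) \<and> isL2 (v t)"
    and Nb: "\<And>t. t \<in> S \<Longrightarrow> N t \<in> sets borel \<and> N t \<subseteq> {0..1}"
    and Z: "\<And>t. t \<in> S \<Longrightarrow> AE x in lborel. x \<in> N t \<longrightarrow> \<rho> t x = 0"
    and D: "\<And>t \<eta>. t \<in> S \<Longrightarrow> \<eta> > 0 \<Longrightarrow> \<forall>\<^sub>F s in at t within S.
              (LINT x:{0..1}|lborel. (\<rho> s x - \<rho> t x - (s - t) * v t x)^2) \<le> \<eta>^2 * (s - t)^2"
    and C: "\<And>t \<eta>. t \<in> S \<Longrightarrow> \<eta> > 0 \<Longrightarrow> \<forall>\<^sub>F s in at t within S.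
              (LINT x:{0..1}|lborel. (v s x - v t x)^2) \<le> \<eta>^2"
  shows "countable {t\<in>S. (LINT x:N t|lborel. (v t x)^2) \<noteq> 0}"
proof -
  have "{t\<in>S. (LINT x:N t|lborel. (v t x)^2) \<noteq> 0} \<subseteq>
     (\<Union>m::nat. {t\<in>S. \<bar>t\<bar> \<le> real m \<and> 1 / (real m + 1) \<le> (LINT x:N t|lborel. (v t x)^2)})"
  proof
    fix t assume t: "t \<in> {t\<in>S. (LINT x:N t|lborel. (v t x)^2) \<noteq> 0}"
    let ?A = "(LINT x:N t|lborel. (v t x)^2)"
    have Apos: "?A > 0" using t Q_nonneg[of "N t" "v t"] by auto
    obtain m1 :: nat where m1: "\<bar>t\<bar> \<le> real m1" using real_arch_simple by blast
    obtain m2 :: nat where m2: "1 / ?A < real m2" using reals_Archimedean2 by blast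
    define m where "m = max m1 m2"
    have "\<bar>t\<bar> \<le> real m" using m1 by (simp add: m_def)
    moreover have "1 / (real m + 1) \<le> ?A"
    proof -
      have "1 / ?A < real m + 1" using m2 by (simp add: m_def)
      then show ?thesis using Apos by (simp add: field_simps)
    qed
    ultimately show "t \<in> (\<Union>m::nat. {t\<in>S. \<bar>t\<bar> \<le> real m \<and> 1 / (real m + 1) \<le> (LINT x:N t|lborel. (v t x)^2)})"
      using t by blast
  qed
  moreover have "countable (\<Union>m::nat. {t\<in>S. \<bar>t\<bar> \<le> real m \<and> 1 / (real m + 1) \<le> (LINT x:N t|lborel. (v t x)^2)})"
    by (intro countable_UN[OF _ countable_finite] core_finite[OF Scl L2 Nb Z D C]) auto
  ultimately show ?thesis using countable_subset by blast
qed

lemma Phi_diff: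
  fixes g :: "real \<Rightarrow> real"
  assumes g: "set_integrable lborel {0..1} g" and ab: "0 \<le> a" "a \<le> b" "b \<le> 1"
  shows "(LBINT y=0..ereal b. g y) - (LBINT y=0..ereal a. g y) = (LINT y:{a..b}|lborel. g y)"
proof -
  have "set_integrable lborel (einterval 0 (ereal b)) g"
    by (rule set_integrable_subset[OF g]) (use ab in \<open>auto simp: einterval_def\<close>)
  then have int: "interval_lebesgue_integrable lborel (min 0 (min (ereal a) (ereal b))) (max 0 (max (ereal a) (ereal b))) g"
    using ab by (simp add: interval_lebesgue_integrable_def min_def max_def)
  have "(LBINT y=0..ereal a. g y) + (LBINT y=ereal a..ereal b. g y) = (LBINT y=0..ereal b. g y)"
    by (rule interval_integral_sum[OF int])
  moreover have "(LBINT y=ereal a..ereal b. g y) = (LINT y:{a..b}|lborel. g y)"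
    using interval_integral_Icc[OF ab(2), of g] by simp
  ultimately show ?thesis by simp
qed

lemma Phi_cont:
  fixes g :: "real \<Rightarrow> real"
  assumes g: "set_integrable lborel {0..1} g"
  shows "continuous_on {0..1} (\<lambda>x. LBINT y=0..ereal x. g y)"
proof -
  have gi: "g integrable_on {0..1}" using set_borel_integral_eq_integral(1)[OF g] .
  have "continuous_on {0..1} (\<lambda>x. integral {0..x} g)" by (rule indefinite_integral_continuous_1[OF gi])
  moreover have eq: "(LBINT y=0..ereal x. g y) = integral {0..x} g" if x: "x \<in> {0..1}" for x
  proof -
    have "(LBINT y=0..ereal x. g y) - (LBINT y=0..ereal 0. g y) = (LINT y:{0..x}|lborel. g y)"
      using x by (intro Phi_diff[OF g]) auto
    moreover have "(LINT y:{0..x}|lborel. g y) = integral {0..x} g"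
      by (rule set_borel_integral_eq_integral(2)) (rule set_integrable_subset[OF g], use x in auto)
    ultimately show ?thesis by (simp add: zero_ereal_def)
  qed
  ultimately show ?thesis by (metis (no_types, lifting) continuous_on_eq eq)
qed

lemma Phi_isCont:
  fixes g :: "real \<Rightarrow> real"
  assumes g: "set_integrable lborel {0..1} g" and x: "x \<in> {0<..<1}"
  shows "isCont (\<lambda>x. LBINT y=0..ereal x. g y) x"
  using continuous_on_interior[OF Phi_cont[OF g], of x] x by simp

lemma set_int_mono_nonneg:
  fixes g :: "real \<Rightarrow> real"
  assumes "set_integrable lborel B g" "A \<in> sets borel" "A \<subseteq> B" "\<And>x. 0 \<le> g x"
  shows "(LINT x:A|lborel. g x) \<le> (LINT x:B|lborel. g x)"
proof -
  have iA: "set_integrable lborel A g" by (rule set_integrable_subset[OF assms(1)]) (use assms in auto)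
  show ?thesis unfolding set_lebesgue_integral_def
    apply (rule integral_mono)
    using iA assms by (auto simp: set_integrable_def indicator_def)
qed

lemma small_inv_nat: "s > 0 \<Longrightarrow> \<exists>m::nat. 1 / (real m + 1) < (s::real)"
proof -
  assume s: "s > 0"
  obtain m :: nat where "1 / s < real m" using reals_Archimedean2 by blast
  then have "1 / s < real m + 1" by simp
  then have "1 < s * (real m + 1)" using s by (simp add: field_simps)
  then show ?thesis using s by (intro exI[of _ m]) (simp add: field_simps)
qed

lemma deriv0_char:
  fixes \<Phi> :: "real \<Rightarrow> real"
  assumes cont: "\<And>y. y \<in> {0<..<1} \<Longrightarrow> isCont \<Phi> y" and x: "x \<in> {0<..<1}"
  shows "(\<Phi> has_real_derivative 0) (at x) \<longleftrightarrow> (\<forall>n::nat. \<exists>m::nat. \<forall>r::rat.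
     real_of_rat r \<noteq> 0 \<and> \<bar>real_of_rat r\<bar> < 1/(real m+1) \<longrightarrow> \<bar>\<Phi> (x + real_of_rat r) - \<Phi> x\<bar> \<le> \<bar>real_of_rat r\<bar>/(real n+1))"
  (is "?L \<longleftrightarrow> ?R")
proof
  assume ?L
  then have L: "(\<lambda>h. (\<Phi> (x + h) - \<Phi> x) / h) \<midarrow>0\<rightarrow> 0" by (simp add: DERIV_def)
  show ?R
  proof
    fix n :: nat
    have "1/(real n+1) > 0" by simp
    with L obtain s where s: "s > 0" "\<And>h. h \<noteq> 0 \<and> norm (h - 0) < s \<Longrightarrow> norm ((\<Phi> (x + h) - \<Phi> x) / h - 0) < 1/(real n+1)"
      unfolding LIM_eq by metis
    obtain m :: nat where m: "1 / (real m + 1) < s" using small_inv_nat[OF s(1)] by blast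
    show "\<exists>m::nat. \<forall>r::rat. real_of_rat r \<noteq> 0 \<and> \<bar>real_of_rat r\<bar> < 1/(real m+1) \<longrightarrow> \<bar>\<Phi> (x + real_of_rat r) - \<Phi> x\<bar> \<le> \<bar>real_of_rat r\<bar>/(real n+1)"
    proof (intro exI[of _ m] allI impI)
      fix r :: rat
      let ?q = "real_of_rat r"
      assume q: "?q \<noteq> 0 \<and> \<bar>?q\<bar> < 1/(real m+1)"
      then have "\<bar>(\<Phi> (x + ?q) - \<Phi> x) / ?q\<bar> < 1/(real n+1)" using s(2)[of ?q] m by auto
      then have "\<bar>\<Phi> (x + ?q) - \<Phi> x\<bar> / \<bar>?q\<bar> < 1/(real n+1)" by (simp add: abs_divide)
      then have "\<bar>\<Phi> (x + ?q) - \<Phi> x\<bar> < \<bar>?q\<bar> * (1/(real n+1))" using q by (simp add: divide_less_eq mult.commute)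
      then show "\<bar>\<Phi> (x + ?q) - \<Phi> x\<bar> \<le> \<bar>?q\<bar>/(real n+1)" by simp
    qed
  qed
next
  assume R: ?R
  have "(\<lambda>h. (\<Phi> (x + h) - \<Phi> x) / h) \<midarrow>0\<rightarrow> 0"
    unfolding LIM_eq
  proof (intro allI impI)
    fix e :: real assume e: "e > 0"
    obtain n :: nat where n: "1 / (real n + 1) < e" using small_inv_nat[OF e] by blast
    obtain m :: nat where m: "\<forall>r::rat. real_of_rat r \<noteq> 0 \<and> \<bar>real_of_rat r\<bar> < 1/(real m+1) \<longrightarrow> \<bar>\<Phi> (x + real_of_rat r) - \<Phi> x\<bar> \<le> \<bar>real_of_rat r\<bar>/(real n+1)"
      using R by blast
    define s where "s = min (1/(real m+1)) (min x (1 - x))"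
    have s_pos: "s > 0" using x by (simp add: s_def)
    have claim: "\<bar>\<Phi> (x + h) - \<Phi> x\<bar> \<le> \<bar>h\<bar>/(real n+1)" if h: "h \<noteq> 0" "\<bar>h\<bar> < s" for h
    proof (rule ccontr)
      assume c: "\<not> ?thesis"
      define F where "F = (\<lambda>y. \<bar>\<Phi> (x + y) - \<Phi> x\<bar> - \<bar>y\<bar>/(real n+1))"
      have Fh: "F h > 0" using c by (simp add: F_def)
      have xh: "x + h \<in> {0<..<1}" using h x by (auto simp: s_def abs_if split: if_splits)
      have c1: "isCont (\<lambda>y. \<Phi> (x + y)) h"
        by (rule isCont_o2[where f="\<lambda>y. x + y" and g=\<Phi>]) (auto intro: continuous_intros cont[OF xh])
      have cF: "isCont F h" unfolding F_def
        by (intro continuous_intros c1) (simp add: add_nonneg_eq_0_iff)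
      then have "\<forall>\<^sub>F y in at h. F y > 0"
        using Fh by (simp add: isCont_def order_tendstoD(1))
      then obtain d where d: "d > 0" "\<And>y. y \<noteq> h \<Longrightarrow> dist y h < d \<Longrightarrow> F y > 0"
        unfolding eventually_at by auto
      have d2: "\<And>y. dist y h < d \<Longrightarrow> F y > 0" using d Fh by (metis)
      define d' where "d' = min d (min \<bar>h\<bar> (1/(real m+1) - \<bar>h\<bar>))"
      have d'pos: "d' > 0" using d h by (auto simp: d'_def s_def)
      obtain q where q: "q \<in> \<rat>" "h - d' < q" "q < h + d'" using Rats_dense_in_real[of "h - d'" "h + d'"] d'pos by auto
      obtain r where r: "q = real_of_rat r" using q(1) Rats_cases by blast
      have qh: "\<bar>q - h\<bar> < d'" using q by auto
      have "q \<noteq> 0" using qh by (auto simp: d'_def)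
      moreover have "\<bar>q\<bar> < 1/(real m+1)" using qh by (auto simp: d'_def)
      ultimately have "\<bar>\<Phi> (x + q) - \<Phi> x\<bar> \<le> \<bar>q\<bar>/(real n+1)" using m r by blast
      then have "\<not> F q > 0" by (simp add: F_def)
      moreover have "F q > 0" using d2[of q] qh by (auto simp: d'_def dist_real_def)
      ultimately show False by blast
    qed
    show "\<exists>s>0. \<forall>h. h \<noteq> 0 \<and> norm (h - 0) < s \<longrightarrow> norm ((\<Phi> (x + h) - \<Phi> x) / h - 0) < e"
    proof (intro exI[of _ s] conjI allI impI)
      show "s > 0" by (rule s_pos)
      fix h :: real assume h: "h \<noteq> 0 \<and> norm (h - 0) < s"
      have "\<bar>\<Phi> (x + h) - \<Phi> x\<bar> \<le> \<bar>h\<bar>/(real n+1)" using claim h by auto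
      then have "\<bar>\<Phi> (x + h) - \<Phi> x\<bar> / \<bar>h\<bar> \<le> 1/(real n+1)" using h by (simp add: divide_le_eq)
      then show "norm ((\<Phi> (x + h) - \<Phi> x) / h - 0) < e" using n by (simp add: abs_divide)
    qed
  qed
  then show ?L by (simp add: DERIV_def)
qed

lemma deriv_const_iff:
  fixes \<Phi> :: "real \<Rightarrow> real"
  shows "((\<lambda>y. \<Phi> y + c) has_real_derivative 0) (at x) \<longleftrightarrow> (\<Phi> has_real_derivative 0) (at x)"
proof
  assume "((\<lambda>y. \<Phi> y + c) has_real_derivative 0) (at x)"
  from DERIV_diff[OF this DERIV_const[of c]] show "(\<Phi> has_real_derivative 0) (at x)" by simp
next
  assume "(\<Phi> has_real_derivative 0) (at x)"
  from DERIV_add[OF this DERIV_const[of c]] show "((\<lambda>y. \<Phi> y + c) has_real_derivative 0) (at x)" by simp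
qed

lemma Nd_borel:
  fixes g :: "real \<Rightarrow> real"
  assumes g: "set_integrable lborel {0..1} g" and gm: "g \<in> borel_measurable lborel"
  shows "{x\<in>{0..<1}. ((\<lambda>y. (LBINT z=0..ereal y. g z) + c) has_real_derivative 0) (at x)} \<in> sets borel"
proof -
  define \<Phi> where "\<Phi> = (\<lambda>y. LBINT z=0..ereal y. g z)"
  have [measurable]: "\<Phi> \<in> borel_measurable borel" unfolding \<Phi>_def
    by (rule meas_ival1[OF gm]) simp
  have cont: "\<And>y. y \<in> {0<..<1} \<Longrightarrow> isCont \<Phi> y" unfolding \<Phi>_def by (rule Phi_isCont[OF g])
  have eq: "{x\<in>{0..<1}. ((\<lambda>y. (LBINT z=0..ereal y. g z) + c) has_real_derivative 0) (at x)}
     = ({x\<in>{0..<1}. ((\<lambda>y. (LBINT z=0..ereal y. g z) + c) has_real_derivative 0) (at x)} \<inter> {0})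
       \<union> {x. x \<in> {0<..<1} \<and> (\<forall>n::nat. \<exists>m::nat. \<forall>r::rat.
     real_of_rat r \<noteq> 0 \<and> \<bar>real_of_rat r\<bar> < 1/(real m+1) \<longrightarrow> \<bar>\<Phi> (x + real_of_rat r) - \<Phi> x\<bar> \<le> \<bar>real_of_rat r\<bar>/(real n+1))}"
    (is "?A = ?B \<union> ?C")
  proof (intro equalityI subsetI)
    fix x assume "x \<in> ?A"
    then show "x \<in> ?B \<union> ?C"
      using deriv0_char[OF cont, of x] deriv_const_iff[of \<Phi> c x] by (cases "x = 0") (auto simp: \<Phi>_def)
  next
    fix x assume "x \<in> ?B \<union> ?C"
    then show "x \<in> ?A"
      using deriv0_char[OF cont, of x] deriv_const_iff[of \<Phi> c x] by (auto simp: \<Phi>_def)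
  qed
  have "finite ?B" by (rule finite_subset[of _ "{0}"]) auto
  then have B: "?B \<in> sets borel" by (intro borel_closed finite_imp_closed)
  have C: "?C \<in> sets borel" by measurable
  have BC: "?B \<union> ?C \<in> sets borel" using B C by auto
  show ?thesis by (rule ssubst[OF eq]) (rule BC)
qed

lemma grid_bound:
  fixes g :: "real \<Rightarrow> real" and \<Phi> :: "real \<Rightarrow> real" and Dk :: "real set" and M :: nat and \<epsilon> h :: real
  assumes g: "set_integrable lborel {0..1} g" and gnn: "\<And>x. 0 \<le> g x"
    and \<Phi>: "\<And>a b. 0 \<le> a \<Longrightarrow> a \<le> b \<Longrightarrow> b \<le> 1 \<Longrightarrow> \<Phi> b - \<Phi> a = (LINT y:{a..b}|lborel. g y)"
    and M: "M > 0" and h: "h = 1 / real M"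
    and Dk: "Dk = {x. h \<le> x \<and> x \<le> 1 - h \<and> \<Phi> (x + h) - \<Phi> (x - h) \<le> 2*\<epsilon>*h}"
    and e: "\<epsilon> > 0"
  shows "(LINT x:Dk|lborel. g x) \<le> 2*\<epsilon>"
proof -
  have hpos: "h > 0" using M h by simp
  define J where "J j = {real j * h .. (real j + 1) * h}" for j :: nat
  define SS where "SS = {j\<in>{..<M}. J j \<inter> Dk \<noteq> {}}"
  have fSS: "finite SS" by (simp add: SS_def)
  have Jsub: "J j \<subseteq> {0..1}" if "j < M" for j
  proof -
    have jj: "real j + 1 \<le> real M" using that by linarith
    have "(real j + 1) * h \<le> real M * h" using jj hpos by (intro mult_right_mono) auto
    then have "(real j + 1) * h \<le> 1" using M h by simp
    then show ?thesis using hpos by (auto simp: J_def)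
  qed
  have cov: "\<exists>j\<in>SS. x \<in> J j" if x: "x \<in> Dk" for x
  proof -
    have x01: "0 \<le> x" "x < 1" using x hpos Dk by auto
    define j where "j = nat \<lfloor>x * real M\<rfloor>"
    have fl0: "0 \<le> \<lfloor>x * real M\<rfloor>" using x01 by simp
    have rj: "real j = of_int \<lfloor>x * real M\<rfloor>" using fl0 by (simp add: j_def)
    have a1: "real j \<le> x * real M" using rj by linarith
    have a2: "x * real M < real j + 1" using rj by linarith
    have jM: "j < M"
    proof -
      have "x * real M < real M" using x01 M by simp
      then have "real j < real M" using a1 by linarith
      then show ?thesis by simp
    qed
    have "x \<in> J j" unfolding J_def h using a1 a2 M by (auto simp: field_simps)
    then show ?thesis using jM x by (auto simp: SS_def intro!: bexI[of _ j])
  qed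
  have ij: "integrable lborel (\<lambda>x. indicator (J j) x * g x)" if "j \<in> SS" for j
  proof -
    have "j < M" using that by (simp add: SS_def)
    from set_integrable_subset[OF g _ Jsub[OF this]] show ?thesis
      by (simp add: set_integrable_def J_def)
  qed
  have Dsub: "Dk \<subseteq> {0..1}" using hpos Dk by auto
  have "(LINT x:Dk|lborel. g x) \<le> (\<integral>x. (\<Sum>j\<in>SS. indicator (J j) x * g x) \<partial>lborel)"
    unfolding set_lebesgue_integral_def
  proof (rule integral_mono')
    show "integrable lborel (\<lambda>x. \<Sum>j\<in>SS. indicator (J j) x * g x)"
      using ij by (intro Bochner_Integration.integrable_sum) auto
    fix x
    show "indicat_real Dk x *\<^sub>R g x \<le> (\<Sum>j\<in>SS. indicator (J j) x * g x)"
    proof (cases "x \<in> Dk")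
      case True
      then obtain j where j: "j \<in> SS" "x \<in> J j" using cov by blast
      have "g x = indicator (J j) x * g x" using j by simp
      also have "\<dots> \<le> (\<Sum>j\<in>SS. indicator (J j) x * g x)"
        by (rule member_le_sum[OF j(1) _ fSS]) (simp add: gnn)
      finally show ?thesis using True by simp
    next
      case False
      have "0 \<le> (\<Sum>j\<in>SS. indicator (J j) x * g x)" by (intro sum_nonneg) (simp add: gnn)
      then show ?thesis using False by simp
    qed
    show "0 \<le> (\<Sum>j\<in>SS. indicator (J j) x * g x)" by (intro sum_nonneg) (simp add: gnn)
  qed
  also have "\<dots> = (\<Sum>j\<in>SS. (LINT x:J j|lborel. g x))"
    unfolding set_lebesgue_integral_def using ij by (simp add: Bochner_Integration.integral_sum)
  also have "\<dots> \<le> (\<Sum>j\<in>SS. 2*\<epsilon>*h)"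
  proof (rule sum_mono)
    fix j assume j: "j \<in> SS"
    then obtain x where x: "x \<in> J j" "x \<in> Dk" by (auto simp: SS_def)
    have xs: "h \<le> x" "x \<le> 1 - h" "\<Phi> (x + h) - \<Phi> (x - h) \<le> 2*\<epsilon>*h" using x(2) Dk by auto
    have Jx: "J j \<subseteq> {x - h..x + h}" using x(1) by (auto simp: J_def algebra_simps)
    have "(LINT y:J j|lborel. g y) \<le> (LINT y:{x - h..x + h}|lborel. g y)"
      by (rule set_int_mono_nonneg[OF set_integrable_subset[OF g] _ Jx gnn]) (use xs in \<open>auto simp: J_def\<close>)
    also have "\<dots> = \<Phi> (x + h) - \<Phi> (x - h)" using \<Phi>[of "x - h" "x + h"] xs hpos by simp
    finally show "(LINT y:J j|lborel. g y) \<le> 2*\<epsilon>*h" using xs by simp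
  qed
  also have "\<dots> = real (card SS) * (2*\<epsilon>*h)" by simp
  also have "\<dots> \<le> real M * (2*\<epsilon>*h)"
  proof (rule mult_right_mono)
    have "card SS \<le> card {..<M}" by (rule card_mono) (auto simp: SS_def)
    then show "real (card SS) \<le> real M" by simp
  qed (use e hpos in simp)
  also have "\<dots> = 2*\<epsilon>" using M h by simp
  finally show ?thesis .
qed

lemma int_N_zero:
  fixes g :: "real \<Rightarrow> real" and N :: "real set"
  assumes g: "set_integrable lborel {0..1} g" and gm: "g \<in> borel_measurable lborel" and gnn: "\<And>x. 0 \<le> g x"
    and Nb: "N \<in> sets borel" "N \<subseteq> {0<..<1}"
    and der: "\<And>x. x \<in> N \<Longrightarrow> ((\<lambda>y. LBINT z=0..ereal y. g z) has_real_derivative 0) (at x)"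
  shows "(LINT x:N|lborel. g x) = 0"
proof -
  define \<Phi> where "\<Phi> = (\<lambda>y. LBINT z=0..ereal y. g z)"
  have [measurable]: "\<Phi> \<in> borel_measurable borel" unfolding \<Phi>_def
    by (rule meas_ival1[OF gm]) simp
  have \<Phi>d: "\<And>a b. 0 \<le> a \<Longrightarrow> a \<le> b \<Longrightarrow> b \<le> 1 \<Longrightarrow> \<Phi> b - \<Phi> a = (LINT y:{a..b}|lborel. g y)"
    unfolding \<Phi>_def by (rule Phi_diff[OF g])
  have [measurable]: "N \<in> sets borel" by (rule Nb(1))
  have Nint: "set_integrable lborel N g" by (rule set_integrable_subset[OF g]) (use Nb in auto)
  have bound: "(LINT x:N|lborel. g x) \<le> 2*\<epsilon>" if e: "\<epsilon> > 0" for \<epsilon>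
  proof -
    define hh where "hh k = 1 / real ((2::nat)^k)" for k :: nat
    have hhpos: "hh k > 0" for k by (simp add: hh_def)
    define D where "D k = {x. hh k \<le> x \<and> x \<le> 1 - hh k \<and> \<Phi> (x + hh k) - \<Phi> (x - hh k) \<le> 2*\<epsilon>*hh k}" for k
    define D' where "D' K = {x. \<forall>k. K \<le> k \<longrightarrow> x \<in> D k}" for K
    have D'b[measurable]: "D' K \<in> sets borel" for K unfolding D'_def D_def by measurable
    have grid: "(LINT x:D k|lborel. g x) \<le> 2*\<epsilon>" for k
      by (rule grid_bound[OF g gnn \<Phi>d _ _ _ e, of "2^k" "hh k"]) (auto simp: hh_def D_def)
    have Dsub: "D k \<subseteq> {0..1}" for k using hhpos[of k] by (auto simp: D_def)
    have D'sub: "D' K \<subseteq> D K" for K by (auto simp: D'_def)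
    have inc: "incseq (\<lambda>K. N \<inter> D' K)" unfolding incseq_def D'_def by auto
    have cover: "N \<subseteq> (\<Union>K. D' K)"
    proof
      fix x assume xN: "x \<in> N"
      have x01: "0 < x" "x < 1" using xN Nb by auto
      have "(\<lambda>h. (\<Phi> (x + h) - \<Phi> x) / h) \<midarrow>0\<rightarrow> 0" using der[OF xN] by (simp add: DERIV_def \<Phi>_def)
      then obtain s where s: "s > 0" "\<And>h. h \<noteq> 0 \<and> norm (h - 0) < s \<Longrightarrow> norm ((\<Phi> (x + h) - \<Phi> x) / h - 0) < \<epsilon>"
        unfolding LIM_eq using e by metis
      have sm: "\<bar>\<Phi> (x + h) - \<Phi> x\<bar> \<le> \<epsilon> * \<bar>h\<bar>" if "h \<noteq> 0" "\<bar>h\<bar> < s" for h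
      proof -
        have "\<bar>(\<Phi> (x + h) - \<Phi> x) / h\<bar> < \<epsilon>" using s(2)[of h] that by simp
        then have "\<bar>\<Phi> (x + h) - \<Phi> x\<bar> / \<bar>h\<bar> < \<epsilon>" by (simp add: abs_divide)
        then show ?thesis using that by (simp add: divide_less_eq less_imp_le)
      qed
      define r where "r = min s (min x (1 - x))"
      have rpos: "r > 0" using s x01 by (simp add: r_def)
      obtain K :: nat where K: "1 / r < real K" using reals_Archimedean2 by blast
      have hK: "hh k < r" if "K \<le> k" for k
      proof -
        have "real K \<le> real k" using that by simp
        also have "real k < real ((2::nat)^k)" by simp
        finally have "1 / r < real ((2::nat)^k)" using K by linarith
        then show ?thesis using rpos unfolding hh_def by (simp add: field_simps)
      qed
      have "x \<in> D' K"
        unfolding D'_def D_def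
      proof (intro CollectI allI impI conjI)
        fix k assume k: "K \<le> k"
        let ?h = "hh k"
        have h1: "?h < s" "?h < x" "?h < 1 - x" using hK[OF k] by (auto simp: r_def)
        show "?h \<le> x" "x \<le> 1 - ?h" using h1 by auto
        have "\<bar>\<Phi> (x + ?h) - \<Phi> x\<bar> \<le> \<epsilon> * \<bar>?h\<bar>" using sm[of ?h] h1 hhpos[of k] by auto
        moreover have "\<bar>\<Phi> (x + - ?h) - \<Phi> x\<bar> \<le> \<epsilon> * \<bar>- ?h\<bar>" using sm[of "- ?h"] h1 hhpos[of k] by auto
        ultimately show "\<Phi> (x + ?h) - \<Phi> (x - ?h) \<le> 2*\<epsilon>*?h" using hhpos[of k] by (simp add: abs_if split: if_splits)
      qed
      then show "x \<in> (\<Union>K. D' K)" by blast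
    qed
    have UN: "(\<Union>K. N \<inter> D' K) = N" using cover by auto
    have conv: "(\<lambda>K. LINT x:(N \<inter> D' K)|lborel. g x) \<longlonglongrightarrow> (LINT x:(\<Union>K. N \<inter> D' K)|lborel. g x)"
      by (rule set_integral_cont_up[OF _ inc]) (auto simp: UN[unfolded Int_UN_distrib[symmetric]] Nint)
    have le: "(LINT x:(N \<inter> D' K)|lborel. g x) \<le> 2*\<epsilon>" for K
    proof -
      have "(LINT x:(N \<inter> D' K)|lborel. g x) \<le> (LINT x:D K|lborel. g x)"
      proof (rule set_int_mono_nonneg[OF set_integrable_subset[OF g] _ _ gnn])
        show "D K \<in> sets lborel" unfolding D_def by measurable
        show "D K \<subseteq> {0..1}" by (rule Dsub)
        show "N \<inter> D' K \<in> sets borel" by measurable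
        show "N \<inter> D' K \<subseteq> D K" using D'sub by auto
      qed
      then show ?thesis using grid[of K] by linarith
    qed
    show ?thesis using LIMSEQ_le_const2[OF conv] le UN by auto
  qed
  have nn: "0 \<le> (LINT x:N|lborel. g x)"
    unfolding set_lebesgue_integral_def by (rule Bochner_Integration.integral_nonneg) (simp add: gnn)
  show ?thesis
  proof (rule ccontr)
    assume "(LINT x:N|lborel. g x) \<noteq> 0"
    then have p: "(LINT x:N|lborel. g x) > 0" using nn by simp
    have "(LINT x:N|lborel. g x) \<le> 2 * ((LINT x:N|lborel. g x) / 4)" using bound[of "(LINT x:N|lborel. g x) / 4"] p by simp
    then show False using p by simp
  qed
qed

lemma Gop_meas:
  assumes [measurable]: "\<rho> \<in> borel_measurable borel" "\<sigma> \<in> borel_measurable borel"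
  shows "Gop \<mu> \<rho> \<sigma> \<in> borel_measurable borel"
proof -
  have "(\<lambda>x. LBINT y=0..ereal x. 2 * \<rho> y * \<sigma> y) \<in> borel_measurable borel"
    by (rule meas_ival1) auto
  then show ?thesis unfolding Gop_def[abs_def] by measurable
qed

lemma int01_eq: "(LBINT y=0..1. (f::real\<Rightarrow>real) y) = (\<integral>y. indicator {0<..<1} y * f y \<partial>lborel)"
  by (simp add: interval_lebesgue_integral_def set_lebesgue_integral_def einterval_def zero_ereal_def one_ereal_def
      greaterThanLessThan_def greaterThan_def lessThan_def Collect_conj_eq[symmetric])

lemma Fop_meas:
  assumes [measurable]: "\<rho> \<in> borel_measurable borel" "\<sigma> \<in> borel_measurable borel"
  shows "Fop \<mu> \<rho> \<sigma> \<in> borel_measurable borel"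
proof -
  have [measurable]: "Gop \<mu> \<rho> \<sigma> \<in> borel_measurable borel" by (rule Gop_meas) auto
  have I[measurable]: "(\<lambda>p::real\<times>real. LBINT z=ereal (snd p)..ereal (fst p). (\<rho> z)^2) \<in> borel_measurable (borel \<Otimes>\<^sub>M borel)"
    by (rule meas_ival2') auto
  have [measurable]: "(cosh :: real \<Rightarrow> real) \<in> borel_measurable borel"
    by (rule borel_measurable_continuous_onI) (intro continuous_intros)
  have eqM: "sets (borel \<Otimes>\<^sub>M lborel) = sets (borel \<Otimes>\<^sub>M (borel::real measure))"
    by (rule sets_pair_measure_cong) auto
  have "(\<lambda>x. \<integral>y. indicator {0<..<1} y * (cosh (\<bar>LBINT z=ereal y..ereal x. (\<rho> z)^2\<bar> - 1/2) / (2 * sinh (1/2))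
        * ((\<rho> y)^2 * (Gop \<mu> \<rho> \<sigma> y)^2 + 2 * (\<sigma> y)^2)) \<partial>lborel) \<in> borel_measurable borel"
    apply (rule lborel.borel_measurable_lebesgue_integral)
    apply (subst measurable_cong_sets[OF eqM refl])
    by (simp add: split_beta') measurable
  then show ?thesis unfolding Fop_def[abs_def] int01_eq .
qed

lemma Phi_eq_set:
  fixes h :: "real \<Rightarrow> real"
  assumes h: "set_integrable lborel {0..1} h" and x: "0 \<le> x" "x \<le> 1"
  shows "(LBINT y=0..ereal x. h y) = (LINT y:{0..x}|lborel. h y)"
  using Phi_diff[OF h order_refl x(1) x(2)] by (simp add: zero_ereal_def)

lemma int_bound_01:
  fixes h :: "real \<Rightarrow> real"
  assumes h: "set_integrable lborel {0..1} h" and x: "0 \<le> x" "x \<le> 1"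
  shows "\<bar>LBINT y=0..ereal x. h y\<bar> \<le> (LINT y:{0..1}|lborel. \<bar>h y\<bar>)"
proof -
  have "\<bar>LINT y:{0..x}|lborel. h y\<bar> \<le> (LINT y:{0..x}|lborel. \<bar>h y\<bar>)"
    unfolding set_lebesgue_integral_def
    using integral_abs_bound[of lborel "\<lambda>y. indicator {0..x} y *\<^sub>R h y"] by (simp add: abs_mult)
  also have "\<dots> \<le> (LINT y:{0..1}|lborel. \<bar>h y\<bar>)"
    by (rule set_int_mono_nonneg[OF set_integrable_abs[OF h]]) (use x in auto)
  finally show ?thesis using Phi_eq_set[OF h x] by simp
qed

lemma prod_int:
  assumes "isL2 \<rho>" "isL2 \<sigma>"
  shows "set_integrable lborel {0..1} (\<lambda>y. 2 * \<rho> y * \<sigma> y)"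
proof -
  have [measurable]: "\<rho> \<in> borel_measurable borel" "\<sigma> \<in> borel_measurable borel" using assms by (auto simp: isL2_def)
  have i: "set_integrable lborel {0..1} (\<lambda>y. (\<rho> y)^2 + (\<sigma> y)^2)" using assms by (auto simp: isL2_def)
  show ?thesis
  proof (rule set_integrable_bound[OF i])
    show "set_borel_measurable lborel {0..1} (\<lambda>y. 2 * \<rho> y * \<sigma> y)"
      unfolding set_borel_measurable_def by measurable
    have "\<bar>2 * \<rho> y * \<sigma> y\<bar> \<le> (\<rho> y)^2 + (\<sigma> y)^2" for y
    proof -
      have "0 \<le> (\<bar>\<rho> y\<bar> - \<bar>\<sigma> y\<bar>)^2" by simp
      then show ?thesis by (simp add: power2_eq_square algebra_simps abs_mult)
    qed
    then show "AE x in lborel. x \<in> {0..1} \<longrightarrow> norm (2 * \<rho> x * \<sigma> x) \<le> norm ((\<rho> x)^2 + (\<sigma> x)^2)"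
      by simp
  qed
qed

lemma Gop_bound:
  assumes "isL2 \<rho>" "isL2 \<sigma>"
  shows "\<exists>C\<ge>0. \<forall>x\<in>{0..1}. \<bar>Gop \<mu> \<rho> \<sigma> x\<bar> \<le> C"
proof -
  let ?c = "(LBINT y=0..1. (LBINT z=0..ereal y. 2 * \<rho> z * \<sigma> z) * (\<rho> y)^2)"
  let ?C = "(LINT y:{0..1}|lborel. \<bar>2 * \<rho> y * \<sigma> y\<bar>) + \<bar>\<mu>\<bar> + \<bar>?c\<bar>"
  have "\<bar>Gop \<mu> \<rho> \<sigma> x\<bar> \<le> ?C" if x: "x \<in> {0..1}" for x
  proof -
    have "\<bar>LBINT y=0..ereal x. 2 * \<rho> y * \<sigma> y\<bar> \<le> (LINT y:{0..1}|lborel. \<bar>2 * \<rho> y * \<sigma> y\<bar>)"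
      by (rule int_bound_01[OF prod_int[OF assms]]) (use x in auto)
    then show ?thesis unfolding Gop_def by linarith
  qed
  moreover have "?C \<ge> 0" using Q_nonneg by (auto intro!: add_nonneg_nonneg simp: set_lebesgue_integral_def
      intro: Bochner_Integration.integral_nonneg)
  ultimately show ?thesis by blast
qed

lemma I_bound:
  fixes g :: "real \<Rightarrow> real"
  assumes g: "set_integrable lborel {0..1} g" and gnn: "\<And>x. 0 \<le> g x"
    and x: "x \<in> {0..1}" and y: "y \<in> {0..1}"
  shows "\<bar>LBINT z=ereal y..ereal x. g z\<bar> \<le> (LINT z:{0..1}|lborel. g z)"
proof -
  let ?R = "(LINT z:{0..1}|lborel. g z)"
  have rng: "0 \<le> (LBINT z=0..ereal u. g z) \<and> (LBINT z=0..ereal u. g z) \<le> ?R" if u: "u \<in> {0..1}" for u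
  proof -
    have e: "(LBINT z=0..ereal u. g z) = (LINT z:{0..u}|lborel. g z)" using Phi_eq_set[OF g] u by auto
    have "0 \<le> (LINT z:{0..u}|lborel. g z)" unfolding set_lebesgue_integral_def
      by (rule Bochner_Integration.integral_nonneg) (simp add: gnn)
    moreover have "(LINT z:{0..u}|lborel. g z) \<le> ?R"
      by (rule set_int_mono_nonneg[OF g _ _ gnn]) (use u in auto)
    ultimately show ?thesis using e by simp
  qed
  have "set_integrable lborel (einterval 0 (ereal (max y x))) g"
    by (rule set_integrable_subset[OF g]) (use x y in \<open>auto simp: einterval_def max_def split: if_splits\<close>)
  then have int: "interval_lebesgue_integrable lborel (min 0 (min (ereal y) (ereal x))) (max 0 (max (ereal y) (ereal x))) g"
    using x y by (cases "y \<le> x") (auto simp: interval_lebesgue_integrable_def min_def max_def)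
  have "(LBINT z=0..ereal y. g z) + (LBINT z=ereal y..ereal x. g z) = (LBINT z=0..ereal x. g z)"
    by (rule interval_integral_sum[OF int])
  then show ?thesis using rng[OF x] rng[OF y] by linarith
qed

lemma Fop_bound:
  assumes r: "isL2 \<rho>" and s: "isL2 \<sigma>"
  shows "\<exists>C\<ge>0. \<forall>x\<in>{0..1}. \<bar>Fop \<mu> \<rho> \<sigma> x\<bar> \<le> C"
proof -
  have [measurable]: "\<rho> \<in> borel_measurable borel" "\<sigma> \<in> borel_measurable borel" using assms by (auto simp: isL2_def)
  obtain CG where CG: "CG \<ge> 0" "\<And>x. x \<in> {0..1} \<Longrightarrow> \<bar>Gop \<mu> \<rho> \<sigma> x\<bar> \<le> CG" using Gop_bound[OF r s] by blast
  define R where "R = (LINT z:{0..1}|lborel. (\<rho> z)^2)"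
  have R0: "R \<ge> 0" unfolding R_def by (rule Q_nonneg)
  define KB where "KB = cosh (R + 1/2) / (2 * sinh (1/2))"
  have KB0: "KB \<ge> 0" unfolding KB_def by simp
  define b where "b y = indicator {0<..<1} y * (KB * ((\<rho> y)^2 * CG^2 + 2 * (\<sigma> y)^2))" for y
  have bint: "integrable lborel b"
  proof -
    have "set_integrable lborel {0..1} (\<lambda>y. KB * ((\<rho> y)^2 * CG^2 + 2 * (\<sigma> y)^2))"
      using r s by (auto simp: isL2_def)
    then have "set_integrable lborel {0<..<1} (\<lambda>y. KB * ((\<rho> y)^2 * CG^2 + 2 * (\<sigma> y)^2))"
      by (rule set_integrable_subset) auto
    then show ?thesis by (simp add: b_def[abs_def] set_integrable_def)
  qed
  have "\<bar>Fop \<mu> \<rho> \<sigma> x\<bar> \<le> integral\<^sup>L lborel b" if x: "x \<in> {0..1}" for x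
  proof -
    let ?k = "\<lambda>y. cosh (\<bar>LBINT z=ereal y..ereal x. (\<rho> z)^2\<bar> - 1/2) / (2 * sinh (1/2))
        * ((\<rho> y)^2 * (Gop \<mu> \<rho> \<sigma> y)^2 + 2 * (\<sigma> y)^2)"
    have "\<bar>Fop \<mu> \<rho> \<sigma> x\<bar> = \<bar>\<integral>y. indicator {0<..<1} y * ?k y \<partial>lborel\<bar>"
      unfolding Fop_def int01_eq ..
    also have "\<dots> \<le> (\<integral>y. \<bar>indicator {0<..<1} y * ?k y\<bar> \<partial>lborel)" by (rule integral_abs_bound)
    also have "\<dots> \<le> integral\<^sup>L lborel b"
    proof (rule integral_mono'[OF bint])
      fix y :: real
      show "0 \<le> b y" using KB0 by (simp add: b_def)
      show "\<bar>indicator {0<..<1} y * ?k y\<bar> \<le> b y"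
      proof (cases "y \<in> {0<..<1}")
        case False then show ?thesis by (simp add: b_def)
      next
        case True
        then have y: "y \<in> {0..1}" by auto
        have Ib: "\<bar>LBINT z=ereal y..ereal x. (\<rho> z)^2\<bar> \<le> R"
          unfolding R_def by (rule I_bound[OF L2_sq[OF r] _ x y]) simp
        have "cosh (\<bar>LBINT z=ereal y..ereal x. (\<rho> z)^2\<bar> - 1/2) = cosh \<bar>\<bar>LBINT z=ereal y..ereal x. (\<rho> z)^2\<bar> - 1/2\<bar>"
          by simp
        also have "\<dots> \<le> cosh (R + 1/2)"
          using Ib R0 by (subst cosh_real_nonneg_le_iff) auto
        finally have kc: "cosh (\<bar>LBINT z=ereal y..ereal x. (\<rho> z)^2\<bar> - 1/2) / (2 * sinh (1/2)) \<le> KB"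
          unfolding KB_def by (simp add: divide_right_mono)
        have G2: "(Gop \<mu> \<rho> \<sigma> y)^2 \<le> CG^2"
          using CG(2)[OF y] by (metis abs_ge_zero power2_abs power_mono)
        have hh: "0 \<le> (\<rho> y)^2 * (Gop \<mu> \<rho> \<sigma> y)^2 + 2 * (\<sigma> y)^2" by simp
        have hh2: "(\<rho> y)^2 * (Gop \<mu> \<rho> \<sigma> y)^2 + 2 * (\<sigma> y)^2 \<le> (\<rho> y)^2 * CG^2 + 2 * (\<sigma> y)^2"
          using G2 by (simp add: mult_left_mono)
        have "\<bar>?k y\<bar> = ?k y" using hh by simp
        also have "\<dots> \<le> KB * ((\<rho> y)^2 * CG^2 + 2 * (\<sigma> y)^2)"
          using kc hh hh2 KB0 by (intro mult_mono) auto
        finally show ?thesis using True by (simp add: b_def)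
      qed
    qed
    finally show ?thesis .
  qed
  moreover have "integral\<^sup>L lborel b \<ge> 0"
    by (rule Bochner_Integration.integral_nonneg) (use KB0 in \<open>simp add: b_def\<close>)
  ultimately show ?thesis by blast
qed

lemma fop_L2:
  assumes r: "isL2 \<rho>" and s: "isL2 \<sigma>"
  shows "isL2 (fop \<mu> \<rho> \<sigma>)"
proof -
  have [measurable]: "\<rho> \<in> borel_measurable borel" "\<sigma> \<in> borel_measurable borel" using assms by (auto simp: isL2_def)
  have [measurable]: "Gop \<mu> \<rho> \<sigma> \<in> borel_measurable borel" "Fop \<mu> \<rho> \<sigma> \<in> borel_measurable borel"
    by (auto intro: Gop_meas Fop_meas)
  obtain CG where CG: "CG \<ge> 0" "\<And>x. x \<in> {0..1} \<Longrightarrow> \<bar>Gop \<mu> \<rho> \<sigma> x\<bar> \<le> CG" using Gop_bound[OF r s] by blast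
  obtain CF where CF: "CF \<ge> 0" "\<And>x. x \<in> {0..1} \<Longrightarrow> \<bar>Fop \<mu> \<rho> \<sigma> x\<bar> \<le> CF" using Fop_bound[OF r s] by blast
  have m: "fop \<mu> \<rho> \<sigma> \<in> borel_measurable borel" unfolding fop_def[abs_def] by measurable
  have i: "set_integrable lborel {0..1} (\<lambda>x. ((CG^2 + CF)^2 / 4) * (\<rho> x)^2)"
    using r by (auto simp: isL2_def)
  have "set_integrable lborel {0..1} (\<lambda>x. (fop \<mu> \<rho> \<sigma> x)^2)"
  proof (rule set_integrable_bound[OF i])
    show "set_borel_measurable lborel {0..1} (\<lambda>x. (fop \<mu> \<rho> \<sigma> x)^2)"
      unfolding set_borel_measurable_def using m by measurable
    have "(fop \<mu> \<rho> \<sigma> x)^2 \<le> ((CG^2 + CF)^2 / 4) * (\<rho> x)^2" if x: "x \<in> {0..1}" for x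
    proof -
      have g2: "(Gop \<mu> \<rho> \<sigma> x)^2 \<le> CG^2" using CG(2)[OF x] by (metis abs_ge_zero power2_abs power_mono)
      have g0: "0 \<le> (Gop \<mu> \<rho> \<sigma> x)^2" by simp
      have "\<bar>(Gop \<mu> \<rho> \<sigma> x)^2 - Fop \<mu> \<rho> \<sigma> x\<bar> \<le> CG^2 + CF"
        using g2 g0 CF(2)[OF x] unfolding abs_le_iff by linarith
      then have "((Gop \<mu> \<rho> \<sigma> x)^2 - Fop \<mu> \<rho> \<sigma> x)^2 \<le> (CG^2 + CF)^2"
        by (metis abs_ge_zero power2_abs power_mono)
      then have "(\<rho> x)^2 * ((Gop \<mu> \<rho> \<sigma> x)^2 - Fop \<mu> \<rho> \<sigma> x)^2 \<le> (\<rho> x)^2 * (CG^2 + CF)^2"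
        by (intro mult_left_mono) auto
      moreover have "(fop \<mu> \<rho> \<sigma> x)^2 = (\<rho> x)^2 * ((Gop \<mu> \<rho> \<sigma> x)^2 - Fop \<mu> \<rho> \<sigma> x)^2 / 4"
        unfolding fop_def by (simp add: power_mult_distrib power_divide)
      ultimately show ?thesis by (simp add: algebra_simps)
    qed
    then show "AE x in lborel. x \<in> {0..1} \<longrightarrow> norm ((fop \<mu> \<rho> \<sigma> x)^2) \<le> norm (((CG^2 + CF)^2 / 4) * (\<rho> x)^2)"
      by auto
  qed
  then show ?thesis using m by (simp add: isL2_def)
qed

lemma Q_from_L2norm:
  assumes "L2norm f < \<eta>"
  shows "(LINT x:{0..1}|lborel. (f x)^2) < \<eta>^2"
proof -
  let ?Q = "(LINT x:{0..1}|lborel. (f x)^2)"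
  have Q0: "0 \<le> ?Q" by (rule Q_nonneg)
  have "sqrt ?Q < \<eta>" using assms by (simp add: L2norm_def)
  then have "(sqrt ?Q)^2 < \<eta>^2" using Q0 by (intro power_strict_mono) auto
  then show ?thesis using Q0 by simp
qed

lemma main_fixed_t:
  fixes u0 :: "real \<Rightarrow> real" and \<rho> v :: "real \<Rightarrow> real \<Rightarrow> real"
  assumes L2: "isL2 (\<rho> t)" "isL2 (v t)"
  shows "Nset \<mu> u0 \<rho> v t \<in> sets borel \<and> Nset \<mu> u0 \<rho> v t \<subseteq> {0..1}
     \<and> (AE x in lborel. x \<in> Nset \<mu> u0 \<rho> v t \<longrightarrow> \<rho> t x = 0)"
proof -
  define g where "g = (\<lambda>x. (\<rho> t x)^2)"
  have gi: "set_integrable lborel {0..1} g" using L2 by (simp add: isL2_def g_def)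
  have [measurable]: "\<rho> t \<in> borel_measurable borel" using L2 by (simp add: isL2_def)
  have gm[measurable]: "g \<in> borel_measurable lborel" unfolding g_def by measurable
  define c where "c = t * u0 0 - (LBINT \<tau>=0..ereal t. (LBINT s=0..ereal \<tau>. Hop \<mu> (\<rho> s) (v s) 0))"
  have K: "(\<lambda>y. Kfun \<mu> u0 \<rho> v t y) = (\<lambda>y. (LBINT z=0..ereal y. g z) + c)"
    by (simp add: Kfun_def c_def g_def fun_eq_iff)
  have Neq: "Nset \<mu> u0 \<rho> v t = {x\<in>{0..<1}. ((\<lambda>y. (LBINT z=0..ereal y. g z) + c) has_real_derivative 0) (at x)}"
    unfolding Nset_def K ..
  have Nb: "Nset \<mu> u0 \<rho> v t \<in> sets borel" unfolding Neq by (rule Nd_borel[OF gi gm])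
  have Nsub: "Nset \<mu> u0 \<rho> v t \<subseteq> {0..1}" unfolding Neq by auto
  define N' where "N' = Nset \<mu> u0 \<rho> v t \<inter> {0<..<1}"
  have N'b[measurable]: "N' \<in> sets borel" using Nb by (simp add: N'_def)
  have int0: "(LINT x:N'|lborel. g x) = 0"
  proof (rule int_N_zero[OF gi gm _ N'b])
    show "0 \<le> g x" for x by (simp add: g_def)
    show "N' \<subseteq> {0<..<1}" by (auto simp: N'_def)
    fix x assume "x \<in> N'"
    then have "((\<lambda>y. (LBINT z=0..ereal y. g z) + c) has_real_derivative 0) (at x)"
      unfolding N'_def Neq by auto
    then show "((\<lambda>y. LBINT z=0..ereal y. g z) has_real_derivative 0) (at x)"
      using deriv_const_iff by blast
  qed
  have iN': "integrable lborel (\<lambda>x. indicator N' x *\<^sub>R g x)"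
  proof -
    have "set_integrable lborel N' g" by (rule set_integrable_subset[OF gi]) (use N'b in \<open>auto simp: N'_def\<close>)
    then show ?thesis by (simp add: set_integrable_def)
  qed
  have "AE x in lborel. indicator N' x *\<^sub>R g x = 0"
    using integral_nonneg_eq_0_iff_AE[OF iN'] int0 by (simp add: set_lebesgue_integral_def g_def)
  then have Z: "AE x in lborel. x \<in> Nset \<mu> u0 \<rho> v t \<longrightarrow> \<rho> t x = 0"
    using AE_lborel_singleton[of 0]
  proof eventually_elim
    case (elim x)
    then show ?case using Nsub by (auto simp: N'_def g_def indicator_def Neq)
  qed
  show ?thesis using Nb Nsub Z by blast
qed

lemma D_from_deriv:
  fixes \<rho> :: "real \<Rightarrow> real \<Rightarrow> real"
  assumes d: "has_L2_derivative \<rho> w t S" and e: "\<eta> > 0"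
  shows "\<forall>\<^sub>F s in at t within S.
      (LINT x:{0..1}|lborel. (\<rho> s x - \<rho> t x - (s - t) * w x)^2) \<le> \<eta>^2 * (s - t)^2"
proof -
  have "\<forall>\<^sub>F s in at t within S. L2norm (\<lambda>x. (\<rho> s x - \<rho> t x) / (s - t) - w x) < \<eta>"
    using d e unfolding has_L2_derivative_def by (rule order_tendstoD(2))
  then obtain d where d: "d > 0" "\<And>s. s \<in> S \<Longrightarrow> s \<noteq> t \<Longrightarrow> dist s t < d \<Longrightarrow>
        L2norm (\<lambda>x. (\<rho> s x - \<rho> t x) / (s - t) - w x) < \<eta>"
    unfolding eventually_at by blast
  show ?thesis unfolding eventually_at
  proof (intro exI[of _ d] conjI ballI impI)
    show "d > 0" by (rule d(1))
    fix s assume s: "s \<in> S" "s \<noteq> t \<and> dist s t < d"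
    have q: "(LINT x:{0..1}|lborel. ((\<rho> s x - \<rho> t x) / (s - t) - w x)^2) < \<eta>^2"
      using Q_from_L2norm d(2)[OF s(1)] s(2) by blast
    have st: "s - t \<noteq> 0" using s(2) by simp
    have eq0: "(s - t) * ((\<rho> s x - \<rho> t x) / (s - t) - w x) = \<rho> s x - \<rho> t x - (s - t) * w x" for x
    proof -
      have "(s - t) * ((\<rho> s x - \<rho> t x) / (s - t)) = \<rho> s x - \<rho> t x" using st by simp
      then show ?thesis by (simp add: right_diff_distrib)
    qed
    have eq: "\<And>x. (\<rho> s x - \<rho> t x - (s - t) * w x)^2 = ((s - t) * ((\<rho> s x - \<rho> t x) / (s - t) - w x))^2"
      using eq0 by simp
    have "(LINT x:{0..1}|lborel. (\<rho> s x - \<rho> t x - (s - t) * w x)^2)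
        = (s - t)^2 * (LINT x:{0..1}|lborel. ((\<rho> s x - \<rho> t x) / (s - t) - w x)^2)"
      by (simp only: eq) (rule Q_scale)
    also have "\<dots> \<le> (s - t)^2 * \<eta>^2" using q by (intro mult_left_mono) auto
    finally show "(LINT x:{0..1}|lborel. (\<rho> s x - \<rho> t x - (s - t) * w x)^2) \<le> \<eta>^2 * (s - t)^2"
      by (simp add: mult.commute)
  qed
qed

lemma C_from_deriv:
  fixes v :: "real \<Rightarrow> real \<Rightarrow> real"
  assumes d: "has_L2_derivative v f t S" and fL2: "isL2 f" and L2: "\<And>s. s \<in> S \<Longrightarrow> isL2 (v s)"
    and tS: "t \<in> S" and e: "\<eta> > 0"
  shows "\<forall>\<^sub>F s in at t within S. (LINT x:{0..1}|lborel. (v s x - v t x)^2) \<le> \<eta>^2"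
proof -
  define Qf where "Qf = (LINT x:{0..1}|lborel. (f x)^2)"
  have Qf0: "Qf \<ge> 0" unfolding Qf_def by (rule Q_nonneg)
  have "\<forall>\<^sub>F s in at t within S. L2norm (\<lambda>x. (v s x - v t x) / (s - t) - f x) < 1"
    using d unfolding has_L2_derivative_def by (rule order_tendstoD(2)) simp
  then obtain d1 where d1: "d1 > 0" "\<And>s. s \<in> S \<Longrightarrow> s \<noteq> t \<Longrightarrow> dist s t < d1 \<Longrightarrow>
        L2norm (\<lambda>x. (v s x - v t x) / (s - t) - f x) < 1"
    unfolding eventually_at by blast
  define r where "r = \<eta> / sqrt (2 + 2 * Qf)"
  have sq: "sqrt (2 + 2 * Qf) > 0" using Qf0 by simp
  have rpos: "r > 0" using e sq by (simp add: r_def)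
  have r2: "r^2 * (2 + 2 * Qf) = \<eta>^2" using Qf0 by (simp add: r_def power_divide)
  show ?thesis unfolding eventually_at
  proof (intro exI[of _ "min d1 r"] conjI ballI impI)
    show "min d1 r > 0" using d1(1) rpos by simp
    fix s assume s: "s \<in> S" "s \<noteq> t \<and> dist s t < min d1 r"
    define qv where "qv = (\<lambda>x. (v s x - v t x) / (s - t))"
    have L2qv: "isL2 qv"
    proof -
      have "isL2 (\<lambda>x. (1 / (s - t)) * (v s x - v t x))"
        by (intro L2_scale L2_diff L2 s(1) tS)
      then show ?thesis by (simp add: qv_def)
    qed
    have L2d: "isL2 (\<lambda>x. qv x - f x)" by (rule L2_diff[OF L2qv fL2])
    have q1: "(LINT x:{0..1}|lborel. (qv x - f x)^2) < 1^2"
      using Q_from_L2norm[OF d1(2)[OF s(1)]] s(2) unfolding qv_def by auto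
    have "(LINT x:{0..1}|lborel. (qv x)^2) = (LINT x:{0..1}|lborel. ((qv x - f x) + f x)^2)" by simp
    also have "\<dots> \<le> 2 * (LINT x:{0..1}|lborel. (qv x - f x)^2) + 2 * (LINT x:{0..1}|lborel. (f x)^2)"
      by (rule Q_tri[OF L2d fL2]) auto
    finally have q2: "(LINT x:{0..1}|lborel. (qv x)^2) \<le> 2 + 2 * Qf" using q1 unfolding Qf_def by simp
    have st: "s - t \<noteq> 0" using s(2) by simp
    have eq: "\<And>x. (v s x - v t x)^2 = ((s - t) * qv x)^2"
      using st by (simp add: qv_def)
    have "(LINT x:{0..1}|lborel. (v s x - v t x)^2) = (s - t)^2 * (LINT x:{0..1}|lborel. (qv x)^2)"
      by (simp only: eq) (rule Q_scale)
    also have "\<dots> \<le> (s - t)^2 * (2 + 2 * Qf)" using q2 by (intro mult_left_mono) auto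
    also have "\<dots> \<le> r^2 * (2 + 2 * Qf)"
    proof (intro mult_right_mono)
      have "\<bar>s - t\<bar> < r" using s(2) by (simp add: dist_real_def)
      then show "(s - t)^2 \<le> r^2" by (metis abs_ge_zero less_imp_le power2_abs power_mono)
    qed (use Qf0 in simp)
    finally show "(LINT x:{0..1}|lborel. (v s x - v t x)^2) \<le> \<eta>^2" using r2 by simp
  qed
qed

theorem lemma8:
  fixes u0 du0 :: "real \<Rightarrow> real"
    and \<rho> v :: "real \<Rightarrow> real \<Rightarrow> real"
  assumes u0_per: "periodic1 u0"
    and du0_per: "periodic1 du0"
    and du0_L2: "isL2 du0"
    and u0_H1: "\<And>x. u0 x = u0 0 + (LBINT y=0..ereal x. du0 y)"
    and per: "\<And>t. t \<ge> 0 \<Longrightarrow> periodic1 (\<rho> t) \<and> periodic1 (v t)"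
    and L2: "\<And>t. t \<ge> 0 \<Longrightarrow> isL2 (\<rho> t) \<and> isL2 (v t)"
    and ode1: "\<And>t. t \<ge> 0 \<Longrightarrow> has_L2_derivative \<rho> (v t) t {0..}"
    and ode2: "\<And>t. t \<ge> 0 \<Longrightarrow>
        has_L2_derivative v (fop (LBINT x=0..1. u0 x) (\<rho> t) (v t)) t {0..}"
    and init1: "AE x in lborel. x \<in> {0..1} \<longrightarrow> \<rho> 0 x = 1"
    and init2: "AE x in lborel. x \<in> {0..1} \<longrightarrow> v 0 x = du0 x / 2"
    and norm1: "\<And>t. t \<ge> 0 \<Longrightarrow> (LBINT x=0..1. (\<rho> t x)^2) = 1"
  shows "AE t in lborel. t \<ge> 0 \<longrightarrow>
           (Nset (LBINT x=0..1. u0 x) u0 \<rho> v t \<in> sets lebesgue \<and>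
            (LINT y:Nset (LBINT x=0..1. u0 x) u0 \<rho> v t|lebesgue. (v t y)^2) = 0)"
proof -
  define \<mu> where "\<mu> = (LBINT x=0..1. u0 x)"
  define N where "N t = Nset \<mu> u0 \<rho> v t" for t
  let ?S = "{0..} :: real set"
  have L2': "\<And>t. t \<in> ?S \<Longrightarrow> isL2 (\<rho> t) \<and> isL2 (v t)" using L2 by auto
  have fixed: "N t \<in> sets borel \<and> N t \<subseteq> {0..1} \<and> (AE x in lborel. x \<in> N t \<longrightarrow> \<rho> t x = 0)"
    if "t \<in> ?S" for t
    unfolding N_def by (rule main_fixed_t) (use L2' that in auto)
  have cnt: "countable {t\<in>?S. (LINT x:N t|lborel. (v t x)^2) \<noteq> 0}"
  proof (rule core_countable[of ?S \<rho> v N])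
    show "closed ?S" by simp
    show "\<And>t. t \<in> ?S \<Longrightarrow> isL2 (\<rho> t) \<and> isL2 (v t)" by (rule L2')
    show "\<And>t. t \<in> ?S \<Longrightarrow> N t \<in> sets borel \<and> N t \<subseteq> {0..1}" using fixed by blast
    show "\<And>t. t \<in> ?S \<Longrightarrow> AE x in lborel. x \<in> N t \<longrightarrow> \<rho> t x = 0" using fixed by blast
    show "\<And>t \<eta>. t \<in> ?S \<Longrightarrow> \<eta> > 0 \<Longrightarrow> \<forall>\<^sub>F s in at t within ?S.
              (LINT x:{0..1}|lborel. (\<rho> s x - \<rho> t x - (s - t) * v t x)^2) \<le> \<eta>^2 * (s - t)^2"
      by (rule D_from_deriv[OF ode1]) auto
    show "\<And>t \<eta>. t \<in> ?S \<Longrightarrow> \<eta> > 0 \<Longrightarrow> \<forall>\<^sub>F s in at t within ?S.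
              (LINT x:{0..1}|lborel. (v s x - v t x)^2) \<le> \<eta>^2"
    proof -
      fix t \<eta> :: real assume t: "t \<in> ?S" and e: "\<eta> > 0"
      show "\<forall>\<^sub>F s in at t within ?S. (LINT x:{0..1}|lborel. (v s x - v t x)^2) \<le> \<eta>^2"
      proof (rule C_from_deriv[OF ode2 _ _ t e])
        show "0 \<le> t" using t by simp
        show "isL2 (fop (LBINT x=0..1. u0 x) (\<rho> t) (v t))" using L2'[OF t] by (intro fop_L2) auto
        show "\<And>s. s \<in> ?S \<Longrightarrow> isL2 (v s)" using L2' by blast
      qed
    qed
  qed
  have "AE t in lborel. t \<notin> {t\<in>?S. (LINT x:N t|lborel. (v t x)^2) \<noteq> 0}"
    by (rule AE_not_in[OF countable_imp_null_set_lborel[OF cnt]])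
  then show ?thesis
  proof eventually_elim
    case (elim t)
    show ?case
    proof
      assume t0: "0 \<le> t"
      have Nt: "N t \<in> sets borel" "N t \<subseteq> {0..1}" using fixed[of t] t0 by auto
      have z: "(LINT x:N t|lborel. (v t x)^2) = 0" using elim t0 by auto
      have [measurable]: "v t \<in> borel_measurable borel" using L2'[of t] t0 by (simp add: isL2_def)
      have [measurable]: "N t \<in> sets borel" by (rule Nt(1))
      have "N t \<in> sets lebesgue" using Nt(1) by simp
      moreover have "(LINT x:N t|lebesgue. (v t x)^2) = (LINT x:N t|lborel. (v t x)^2)"
        unfolding set_lebesgue_integral_def by (rule integral_completion) measurable
      ultimately show "Nset (LBINT x=0..1. u0 x) u0 \<rho> v t \<in> sets lebesgue \<and>
            (LINT y:Nset (LBINT x=0..1. u0 x) u0 \<rho> v t|lebesgue. (v t y)^2) = 0"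
        using z by (simp add: N_def \<mu>_def)
    qed
  qed
qed

end
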